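(* Let $\mathbb{P}_{\omega^*}$ be a canonical form whose dimension-reduced form $\mathbb{P}_{\omega^{**}}$ is regular (i.e. $m_0=0$, or $m_0>0$ and $\varepsilon>0$). Then: (1) if $\mathbb{P}_{\omega^{**}}$ has a unique solution, so does $\mathbb{P}_{\omega^*}$. (2) $\mathbb{P}_{\omega^{**}}$ does not have a unique solution if and only if it is singly-Lagrangian and either (a) $f_1<0$ and $\delta_1=0$, in which case its solutions are unique up to the sign of $\hat z_1\neq0$, and the solutions of $\mathbb{P}_{\omega^*}$ are unique up to replacing $\hat x_1$ by any vector of the same norm; or (b) $\gamma_q<0$, $f_q>0$ and $\delta_q=0$, in which case its solutions are unique up to the sign of $\hat z_q\neq0$, and the solutions of $\mathbb{P}_{\omega^*}$ are unique up to replacing $\hat x_q$ by any vector of the same norm.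
   Context: Canonical form: integers $q\ge1$, $m_0\ge0$, $m_1,\dots,m_q\ge1$, $n=\sum m_i$; reals $\gamma_1>\dots>\gamma_q$ nonzero with $\gamma_1>0$; $\delta_i\ge0$; $\varepsilon\ge0$ ($\varepsilon=0$ if $m_0=0$); $k^*\in\mathbb{R}$; $u_m=(1,0,\dots,0)^\top\in\mathbb{R}^m$. $\mathbb{P}_{\omega^*}$: minimise $\|x-t^*\|^2$ subject to $x^\top B^*x+2b^{*\top}x-k^*=0$ (feasible set nonempty), $B^*=\operatorname{diag}(O_{m_0},\gamma_1I_{m_1},\dots,\gamma_qI_{m_q})$, $t^*=(0_{m_0}^\top,\delta_1u_{m_1}^\top,\dots,\delta_qu_{m_q}^\top)^\top$, $b^*=(\varepsilon u_{m_0}^\top,0^\top,\dots,0^\top)^\top$, $x=(x_0^\top,x_1^\top,\dots,x_q^\top)^\top$, $x_i\in\mathbb{R}^{m_i}$. Dimension-reduced form $\mathbb{P}_{\omega^{**}}$: $\Gamma^*=\operatorname{diag}(\gamma_1,\dots,\gamma_q)$; if $m_0>0$, $w=(y,z^\top)^\top\in\mathbb{R}^{q+1}$, $w_0=(0,\delta^\top)^\top$, $\Delta=\operatorname{diag}(0,\Gamma^* )$, $d=\varepsilon e_1$; if $m_0=0$, $w=z\in\mathbb{R}^q$, $w_0=\delta$, $\Delta=\Gamma^*$, $d=0$; minimise $\|w-w_0\|^2$ subject to $w^\top\Delta w+2d^\top w-k^*=0$; solutions written $\hat w=(\hat y,\hat z_1,\dots,\hat z_q)$. Boundary quantities: $f_1=\sum_{i=2}^q\gamma_i\big((1-\gamma_i/\gamma_1)^{-1}\delta_i\big)^2+2\varepsilon^2\gamma_1^{-1}-k^*$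 and, when $\gamma_q<0$, $f_q=\sum_{i=1}^{q-1}\gamma_i\big((1-\gamma_i/\gamma_q)^{-1}\delta_i\big)^2+2\varepsilon^2\gamma_q^{-1}-k^*$. $\mathbb{P}_{\omega^{**}}$ is non-Lagrangian if $m_0=0$, $k^*=0$, $\delta\neq0$ and $\gamma_q>0$; multiply-Lagrangian if $m_0=0$, $k^*=0$, $\delta=0$; singly-Lagrangian otherwise. *)

theory Defs
  imports Complex_Main
begin

(* Vectors of R^n, n = m 0 + ... + m q, in block form: x i j is the j-th
   component (j < m i) of block x_i (i = 0..q); zero outside the carrier. *)
definition orig_vec :: "nat \<Rightarrow> (nat \<Rightarrow> nat) \<Rightarrow> (nat \<Rightarrow> nat \<Rightarrow> real) \<Rightarrow> bool" where
  "orig_vec q m x \<longleftrightarrow> (\<forall>i j. (q < i \<or> m i \<le> j) \<longrightarrow> x i j = 0)"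

definition tstar :: "(nat \<Rightarrow> real) \<Rightarrow> nat \<Rightarrow> nat \<Rightarrow> real" where
  "tstar \<delta> i j = (if 1 \<le> i \<and> j = 0 then \<delta> i else 0)"

definition orig_obj :: "nat \<Rightarrow> (nat \<Rightarrow> nat) \<Rightarrow> (nat \<Rightarrow> real) \<Rightarrow> (nat \<Rightarrow> nat \<Rightarrow> real) \<Rightarrow> real" where
  "orig_obj q m \<delta> x = (\<Sum>i\<le>q. \<Sum>j<m i. (x i j - tstar \<delta> i j)^2)"

(* x^T B^* x + 2 b^{*T} x - k^*  (b^* = eps u_{m0}; x 0 0 = 0 if m 0 = 0) *)
definition orig_con :: "nat \<Rightarrow> (nat \<Rightarrow> nat) \<Rightarrow> (nat \<Rightarrow> real) \<Rightarrow> real \<Rightarrow> real \<Rightarrow> (nat \<Rightarrow> nat \<Rightarrow> real) \<Rightarrow> real" where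
  "orig_con q m \<gamma> \<epsilon> k x = (\<Sum>i=1..q. \<gamma> i * (\<Sum>j<m i. (x i j)^2)) + 2 * \<epsilon> * x 0 0 - k"

definition orig_feasible where
  "orig_feasible q m \<gamma> \<epsilon> k x \<longleftrightarrow> orig_vec q m x \<and> orig_con q m \<gamma> \<epsilon> k x = 0"

definition orig_sol where
  "orig_sol q m \<gamma> \<delta> \<epsilon> k x \<longleftrightarrow> orig_feasible q m \<gamma> \<epsilon> k x \<and>
     (\<forall>y. orig_feasible q m \<gamma> \<epsilon> k y \<longrightarrow> orig_obj q m \<delta> x \<le> orig_obj q m \<delta> y)"

(* Reduced vectors w = (y, z_1, ..., z_q): w 0 = y (only if m 0 > 0), w i = z_i.
   If m 0 = 0 then w 0 = 0 (w lives in R^q). *)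
definition red_vec :: "nat \<Rightarrow> nat \<Rightarrow> (nat \<Rightarrow> real) \<Rightarrow> bool" where
  "red_vec q m0 w \<longleftrightarrow> (\<forall>i. (q < i \<or> (i = 0 \<and> m0 = 0)) \<longrightarrow> w i = 0)"

definition red_obj :: "nat \<Rightarrow> (nat \<Rightarrow> real) \<Rightarrow> (nat \<Rightarrow> real) \<Rightarrow> real" where
  "red_obj q \<delta> w = (w 0)^2 + (\<Sum>i=1..q. (w i - \<delta> i)^2)"

definition red_con :: "nat \<Rightarrow> (nat \<Rightarrow> real) \<Rightarrow> real \<Rightarrow> real \<Rightarrow> (nat \<Rightarrow> real) \<Rightarrow> real" where
  "red_con q \<gamma> \<epsilon> k w = (\<Sum>i=1..q. \<gamma> i * (w i)^2) + 2 * \<epsilon> * w 0 - k"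

definition red_feasible where
  "red_feasible q m0 \<gamma> \<epsilon> k w \<longleftrightarrow> red_vec q m0 w \<and> red_con q \<gamma> \<epsilon> k w = 0"

definition red_sol where
  "red_sol q m0 \<gamma> \<delta> \<epsilon> k w \<longleftrightarrow> red_feasible q m0 \<gamma> \<epsilon> k w \<and>
     (\<forall>v. red_feasible q m0 \<gamma> \<epsilon> k v \<longrightarrow> red_obj q \<delta> w \<le> red_obj q \<delta> v)"

definition canonical_form where
  "canonical_form q m \<gamma> \<delta> \<epsilon> k \<longleftrightarrow>
     1 \<le> q \<and> (\<forall>i\<in>{1..q}. 1 \<le> m i) \<and>
     (\<forall>i\<in>{1..q}. \<gamma> i \<noteq> 0) \<and> (\<forall>i j. 1 \<le> i \<and> i < j \<and> j \<le> q \<longrightarrow> \<gamma> j < \<gamma> i) \<and>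
     0 < \<gamma> 1 \<and> (\<forall>i\<in>{1..q}. 0 \<le> \<delta> i) \<and> 0 \<le> \<epsilon> \<and> (m 0 = 0 \<longrightarrow> \<epsilon> = 0) \<and>
     (\<exists>x. orig_feasible q m \<gamma> \<epsilon> k x)"

definition regular where
  "regular m0 \<epsilon> \<longleftrightarrow> m0 = 0 \<or> (0 < m0 \<and> 0 < \<epsilon>)"

definition non_lagrangian where
  "non_lagrangian q m0 \<gamma> \<delta> (k::real) \<longleftrightarrow>
     m0 = 0 \<and> k = 0 \<and> (\<exists>i\<in>{1..q}. \<delta> i \<noteq> 0) \<and> 0 < \<gamma> q"

definition multiply_lagrangian where
  "multiply_lagrangian q m0 (\<delta>::nat\<Rightarrow>real) (k::real) \<longleftrightarrow>
     m0 = 0 \<and> k = 0 \<and> (\<forall>i\<in>{1..q}. \<delta> i = 0)"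

definition singly_lagrangian where
  "singly_lagrangian q m0 \<gamma> \<delta> k \<longleftrightarrow>
     \<not> non_lagrangian q m0 \<gamma> \<delta> k \<and> \<not> multiply_lagrangian q m0 \<delta> k"

definition f1 :: "nat \<Rightarrow> (nat \<Rightarrow> real) \<Rightarrow> (nat \<Rightarrow> real) \<Rightarrow> real \<Rightarrow> real \<Rightarrow> real" where
  "f1 q \<gamma> \<delta> \<epsilon> k = (\<Sum>i=2..q. \<gamma> i * (inverse (1 - \<gamma> i / \<gamma> 1) * \<delta> i)^2)
      + 2 * \<epsilon>^2 * inverse (\<gamma> 1) - k"

definition fq :: "nat \<Rightarrow> (nat \<Rightarrow> real) \<Rightarrow> (nat \<Rightarrow> real) \<Rightarrow> real \<Rightarrow> real \<Rightarrow> real" where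
  "fq q \<gamma> \<delta> \<epsilon> k = (\<Sum>i=1..q-1. \<gamma> i * (inverse (1 - \<gamma> i / \<gamma> q) * \<delta> i)^2)
      + 2 * \<epsilon>^2 * inverse (\<gamma> q) - k"

definition red_unique_up_to_sign where
  "red_unique_up_to_sign q m0 \<gamma> \<delta> \<epsilon> k p \<longleftrightarrow>
     (\<exists>w. red_sol q m0 \<gamma> \<delta> \<epsilon> k w \<and> w p \<noteq> 0 \<and>
          {v. red_sol q m0 \<gamma> \<delta> \<epsilon> k v} = {w, w(p := - w p)})"

definition orig_unique_up_to_block where
  "orig_unique_up_to_block q m \<gamma> \<delta> \<epsilon> k p \<longleftrightarrow>
     (\<exists>x. orig_sol q m \<gamma> \<delta> \<epsilon> k x \<and>
          {y. orig_sol q m \<gamma> \<delta> \<epsilon> k y} =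
          {y. orig_vec q m y \<and> (\<forall>i j. i \<noteq> p \<longrightarrow> y i j = x i j) \<and>
              (\<Sum>j<m p. (y p j)^2) = (\<Sum>j<m p. (x p j)^2)})"

end

theory Submission
  imports Defs
begin

lemma blowup:
  fixes h g :: "real \<Rightarrow> real"
  assumes "(h \<longlongrightarrow> 0) F" "eventually (\<lambda>x. h x > 0) F" "(g \<longlongrightarrow> L) F" "A > 0"
  shows "eventually (\<lambda>x. A * inverse (h x) + g x > 0) F"
proof -
  have "filterlim h (at_right 0) F" using assms(1,2) by (rule tendsto_imp_filterlim_at_right)
  then have "filterlim (\<lambda>x. inverse (h x)) at_top F"
    using filterlim_compose filterlim_inverse_at_top_right by blast
  then have "filterlim (\<lambda>x. A * inverse (h x)) at_top F"
    using filterlim_tendsto_pos_mult_at_top[OF tendsto_const assms(4)] by blast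
  then have "filterlim (\<lambda>x. g x + A * inverse (h x)) at_top F"
    using filterlim_tendsto_add_at_top[OF assms(3)] by blast
  then show ?thesis unfolding filterlim_at_top_dense by (auto simp: add.commute)
qed

lemma ident:
  assumes "red_con q \<gamma> \<epsilon> k w = 0" "red_con q \<gamma> \<epsilon> k v = 0" "w 0 = l*\<epsilon>"
    "\<forall>i\<in>{1..q}. (1 - l*\<gamma> i) * w i = \<delta> i"
  shows "red_obj q \<delta> v - red_obj q \<delta> w = (v 0 - w 0)^2 + (\<Sum>i=1..q. (1 - l*\<gamma> i)*(v i - w i)^2)"
proof -
  have "red_obj q \<delta> v - red_obj q \<delta> w = (red_obj q \<delta> v - l * red_con q \<gamma> \<epsilon> k v) - (red_obj q \<delta> w - l * red_con q \<gamma> \<epsilon> k w)"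
    using assms(1,2) by simp
  also have "\<dots> = ((v 0)^2 - 2*l*\<epsilon>*v 0 - ((w 0)^2 - 2*l*\<epsilon>*w 0)) +
     (\<Sum>i=1..q. ((v i - \<delta> i)^2 - l*\<gamma> i * (v i)^2) - ((w i - \<delta> i)^2 - l*\<gamma> i*(w i)^2))"
    by (simp add: red_obj_def red_con_def sum_subtractf sum_distrib_left sum.distrib algebra_simps)
  also have "\<dots> = (v 0 - w 0)^2 + (\<Sum>i=1..q. (1 - l*\<gamma> i)*(v i - w i)^2)"
  proof -
    have a: "(v 0)^2 - 2*l*\<epsilon>*v 0 - ((w 0)^2 - 2*l*\<epsilon>*w 0) = (v 0 - w 0)^2"
      using assms(3) by (simp add: power2_eq_square algebra_simps)
    have b: "(\<Sum>i=1..q. ((v i - \<delta> i)^2 - l*\<gamma> i * (v i)^2) - ((w i - \<delta> i)^2 - l*\<gamma> i*(w i)^2))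
       = (\<Sum>i=1..q. (1 - l*\<gamma> i)*(v i - w i)^2)"
    proof (rule sum.cong)
      fix i assume "i \<in> {1..q}"
      then have d: "\<delta> i = (1 - l*\<gamma> i) * w i" using assms(4) by auto
      show "((v i - \<delta> i)^2 - l*\<gamma> i * (v i)^2) - ((w i - \<delta> i)^2 - l*\<gamma> i*(w i)^2) = (1 - l*\<gamma> i)*(v i - w i)^2"
        unfolding d by (simp add: power2_eq_square algebra_simps)
    qed simp
    show ?thesis using a b by simp
  qed
  finally show ?thesis .
qed

lemma sum_single:
  fixes M :: nat
  assumes "0 < M" "\<forall>j. j \<noteq> 0 \<longrightarrow> f j = 0"
  shows "(\<Sum>j<M. f j) = (f 0 :: real)"
proof -
  have "(\<Sum>j<M. f j) = f 0 + (\<Sum>j\<in>{..<M} - {0}. f j)"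
    using assms(1) by (subst sum.remove[of _ 0]) auto
  also have "(\<Sum>j\<in>{..<M} - {0}. f j) = 0" using assms(2) by (intro sum.neutral) auto
  finally show ?thesis by simp
qed

lemma block_expand:
  fixes M :: nat
  assumes "0 < M"
  shows "(\<Sum>j<M. (y j - (if j = 0 then d else 0))^2) = (\<Sum>j<M. (y j)^2) - 2*d*y 0 + (d::real)^2"
proof -
  have "(\<Sum>j<M. (y j - (if j = 0 then d else 0))^2) = (\<Sum>j<M. (y j)^2 + (if j = 0 then d^2 - 2*d*y 0 else 0))"
    by (rule sum.cong) (auto simp: power2_eq_square algebra_simps)
  also have "\<dots> = (\<Sum>j<M. (y j)^2) + (\<Sum>j<M. (if j = 0 then d^2 - 2*d*y 0 else 0))"
    by (simp add: sum.distrib)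
  also have "(\<Sum>j<M. (if j = 0 then d^2 - 2*d*y 0 else 0)) = d^2 - 2*d*y 0"
    using sum_single[OF assms, of "\<lambda>j. if j = 0 then d^2 - 2*d*y 0 else 0"] by simp
  finally show ?thesis by simp
qed

lemma rest_zero:
  fixes M :: nat
  assumes "0 < M" "(\<Sum>j<M. (y j)^2) = (y 0)^2" "j < M" "j \<noteq> 0"
  shows "(y j :: real) = 0"
proof -
  have "(\<Sum>j<M. (y j)^2) = (y 0)^2 + (\<Sum>j\<in>{..<M} - {0}. (y j)^2)"
    using assms(1) by (subst sum.remove[of _ 0]) auto
  then have "(\<Sum>j\<in>{..<M} - {0}. (y j)^2) = 0" using assms(2) by simp
  then have "\<forall>j\<in>{..<M} - {0}. (y j)^2 = 0" by (subst (asm) sum_nonneg_eq_0_iff) auto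
  then show ?thesis using assms(3,4) by auto
qed

lemma sum_sq_zero:
  fixes M :: nat
  assumes "(\<Sum>j<M. (y j)^2) = 0" "j < M"
  shows "(y j :: real) = 0"
  using assms by (subst (asm) sum_nonneg_eq_0_iff) auto

lemma term_bound:
  fixes g l d :: real
  assumes "0 < g" "l < 0"
  shows "g * (d / (1 - l*g))^2 \<le> d^2 / (-l)"
proof -
  define t where "t = 1 - l*g"
  have lg: "0 < -l*g" using assms by (simp add: mult_neg_pos)
  have t1: "1 \<le> t" using lg unfolding t_def by simp
  have "-l*g \<le> t" unfolding t_def by simp
  also have "t \<le> t^2" using t1 by (simp add: power2_eq_square)
  finally have r0: "-l*g \<le> t^2" .
  have tp: "0 < t^2" using t1 by simp
  have r: "(-l*g) / t^2 \<le> 1" using r0 tp by (subst divide_le_eq_1_pos) auto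
  have "g * (d / t)^2 = d^2 / (-l) * ((-l*g) / t^2)" using assms t1
    by (simp add: power_divide field_simps)
  also have "\<dots> \<le> d^2 / (-l) * 1" using r assms(2) lg t1
    by (intro mult_left_mono) (auto simp: divide_nonneg_neg)
  finally show ?thesis unfolding t_def by simp
qed

locale cf =
  fixes q :: nat and m :: "nat \<Rightarrow> nat" and \<gamma> \<delta> :: "nat \<Rightarrow> real" and \<epsilon> k :: real
  assumes q1: "1 \<le> q" and mpos: "\<And>i. i \<in> {1..q} \<Longrightarrow> 1 \<le> m i"
    and gnz: "\<And>i. i \<in> {1..q} \<Longrightarrow> \<gamma> i \<noteq> 0"
    and gdec: "\<And>i j. 1 \<le> i \<Longrightarrow> i < j \<Longrightarrow> j \<le> q \<Longrightarrow> \<gamma> j < \<gamma> i"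
    and g1: "0 < \<gamma> 1" and dnn: "\<And>i. i \<in> {1..q} \<Longrightarrow> 0 \<le> \<delta> i"
    and enn: "0 \<le> \<epsilon>" and e0: "m 0 = 0 \<Longrightarrow> \<epsilon> = 0"
    and feas: "\<exists>x. orig_feasible q m \<gamma> \<epsilon> k x"
    and reg: "m 0 = 0 \<or> (0 < m 0 \<and> 0 < \<epsilon>)"
begin

abbreviation "RS w \<equiv> red_sol q (m 0) \<gamma> \<delta> \<epsilon> k w"
abbreviation "RF w \<equiv> red_feasible q (m 0) \<gamma> \<epsilon> k w"

lemma gle1: "i \<in> {1..q} \<Longrightarrow> \<gamma> i \<le> \<gamma> 1"
  using gdec[of 1 i] by (cases "i = 1") auto

lemma gleq: "i \<in> {1..q} \<Longrightarrow> \<gamma> q \<le> \<gamma> i"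
  using gdec[of i q] by (cases "i = q") auto

lemma interior_unique:
  assumes "RF w" "w 0 = l*\<epsilon>" "\<forall>i\<in>{1..q}. (1 - l*\<gamma> i) * w i = \<delta> i"
    "\<forall>i\<in>{1..q}. 0 < 1 - l*\<gamma> i"
  shows "RS w" "RS v \<Longrightarrow> v = w"
proof -
  have key: "RF v \<Longrightarrow> red_obj q \<delta> v - red_obj q \<delta> w = (v 0 - w 0)^2 + (\<Sum>i=1..q. (1 - l*\<gamma> i)*(v i - w i)^2)" for v
    using ident[of q \<gamma> \<epsilon> k w v l \<delta>] assms unfolding red_feasible_def by auto
  have nn: "0 \<le> (\<Sum>i=1..q. (1 - l*\<gamma> i)*(v i - w i)^2)" for v
    using assms(4) by (intro sum_nonneg mult_nonneg_nonneg) (auto simp: less_imp_le)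
  show "RS w" unfolding red_sol_def using assms(1) key nn
    by (smt (verit) zero_le_power2)
  assume "RS v"
  then have "RF v" "red_obj q \<delta> v \<le> red_obj q \<delta> w" using assms(1) unfolding red_sol_def by auto
  then have "(v 0 - w 0)^2 + (\<Sum>i=1..q. (1 - l*\<gamma> i)*(v i - w i)^2) \<le> 0" using key[OF \<open>RF v\<close>] by linarith
  then have A: "(v 0 - w 0)^2 = 0" and B: "(\<Sum>i=1..q. (1 - l*\<gamma> i)*(v i - w i)^2) = 0"
    using nn[of v] zero_le_power2[of "v 0 - w 0"] by linarith+
  have B': "\<forall>i\<in>{1..q}. (1 - l*\<gamma> i)*(v i - w i)^2 = 0"
    using B assms(4) by (subst (asm) sum_nonneg_eq_0_iff) (auto simp: less_imp_le)
  show "v = w"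
  proof
    fix i
    show "v i = w i"
    proof (cases "i = 0")
      case True then show ?thesis using A by simp
    next
      case False
      show ?thesis
      proof (cases "i \<le> q")
        case True
        with False have "i \<in> {1..q}" by auto
        then show ?thesis using B' assms(4) by fastforce
      next
        case False
        then show ?thesis using \<open>RF v\<close> assms(1) unfolding red_feasible_def red_vec_def by auto
      qed
    qed
  qed
qed

lemma flip_feasible:
  assumes "RF w" "p \<in> {1..q}"
  shows "RF (w(p := - w p))"
proof -
  have "red_con q \<gamma> \<epsilon> k (w(p := - w p)) = red_con q \<gamma> \<epsilon> k w"
    unfolding red_con_def using assms(2) by (auto intro!: sum.cong)
  then show ?thesis using assms unfolding red_feasible_def red_vec_def by auto
qed

lemma flip_obj:
  assumes "p \<in> {1..q}" "\<delta> p = 0"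
  shows "red_obj q \<delta> (w(p := - w p)) = red_obj q \<delta> w"
  unfolding red_obj_def using assms by (auto intro!: sum.cong)

lemma flip_sol:
  assumes "RS w" "p \<in> {1..q}" "\<delta> p = 0"
  shows "RS (w(p := - w p))"
  using assms flip_feasible flip_obj unfolding red_sol_def by auto

lemma endpoint_sols:
  assumes "RF w" "w 0 = l*\<epsilon>" "\<forall>i\<in>{1..q}. (1 - l*\<gamma> i) * w i = \<delta> i"
    "p \<in> {1..q}" "1 - l*\<gamma> p = 0" "\<forall>i\<in>{1..q}. i \<noteq> p \<longrightarrow> 0 < 1 - l*\<gamma> i"
  shows "{v. RS v} = {w, w(p := - w p)}"
proof -
  have dp: "\<delta> p = 0" using assms(3,4,5) by force
  have key: "RF v \<Longrightarrow> red_obj q \<delta> v - red_obj q \<delta> w = (v 0 - w 0)^2 + (\<Sum>i=1..q. (1 - l*\<gamma> i)*(v i - w i)^2)" for v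
    using ident[of q \<gamma> \<epsilon> k w v l \<delta>] assms unfolding red_feasible_def by auto
  have nnt: "i \<in> {1..q} \<Longrightarrow> 0 \<le> (1 - l*\<gamma> i)*(v i - w i)^2" for v i
    using assms(5,6) by (cases "i = p") auto
  have nn: "0 \<le> (\<Sum>i=1..q. (1 - l*\<gamma> i)*(v i - w i)^2)" for v
    using nnt by (intro sum_nonneg) auto
  have ws: "RS w" unfolding red_sol_def using assms(1) key nn
    by (smt (verit) zero_le_power2)
  have ws': "RS (w(p := - w p))" using flip_sol[OF ws assms(4) dp] .
  show ?thesis
  proof
    show "{w, w(p := - w p)} \<subseteq> {v. RS v}" using ws ws' by auto
    show "{v. RS v} \<subseteq> {w, w(p := - w p)}"
    proof
      fix v assume "v \<in> {v. RS v}"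
      then have "RS v" by simp
      then have "RF v" "red_obj q \<delta> v \<le> red_obj q \<delta> w" using assms(1) unfolding red_sol_def by auto
      then have "(v 0 - w 0)^2 + (\<Sum>i=1..q. (1 - l*\<gamma> i)*(v i - w i)^2) \<le> 0" using key[OF \<open>RF v\<close>] by linarith
      then have A: "(v 0 - w 0)^2 = 0" and B: "(\<Sum>i=1..q. (1 - l*\<gamma> i)*(v i - w i)^2) = 0"
        using nn[of v] zero_le_power2[of "v 0 - w 0"] by linarith+
      have B': "\<forall>i\<in>{1..q}. (1 - l*\<gamma> i)*(v i - w i)^2 = 0"
        using B nnt by (subst (asm) sum_nonneg_eq_0_iff) auto
      have eq: "i \<noteq> p \<Longrightarrow> v i = w i" for i
      proof (cases "i = 0")
        case True then show ?thesis using A by simp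
      next
        case False
        assume ip: "i \<noteq> p"
        show ?thesis
        proof (cases "i \<le> q")
          case True
          with False have "i \<in> {1..q}" by auto
          then show ?thesis using B' assms(6) ip by fastforce
        next
          case False
          then show ?thesis using \<open>RF v\<close> assms(1) unfolding red_feasible_def red_vec_def by auto
        qed
      qed
      have "red_con q \<gamma> \<epsilon> k v - red_con q \<gamma> \<epsilon> k w = (\<Sum>i=1..q. \<gamma> i * ((v i)^2 - (w i)^2))"
        unfolding red_con_def using eq[of 0] assms(4) by (simp add: sum_subtractf algebra_simps)
      also have "\<dots> = \<gamma> p * ((v p)^2 - (w p)^2)"
        using assms(4) eq by (subst sum.remove[of _ p]) (auto intro!: sum.neutral)
      finally have "\<gamma> p * ((v p)^2 - (w p)^2) = 0"
        using \<open>RF v\<close> assms(1) unfolding red_feasible_def by simp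
      then have "(v p)^2 = (w p)^2" using gnz[OF assms(4)] by simp
      then have "v p = w p \<or> v p = - w p" by (simp add: power2_eq_iff)
      then have "v = w \<or> v = w(p := - w p)" using eq by (metis (full_types) fun_upd_apply ext)
      then show "v \<in> {w, w(p := - w p)}" by auto
    qed
  qed
qed


definition "redv y = (\<lambda>i. if i = 0 then y 0 0 else if i \<le> q then sqrt (\<Sum>j<m i. (y i j)^2) else 0)"
definition "embv w = (\<lambda>i j. if i \<le> q \<and> j = 0 \<and> 0 < m i then w i else (0::real))"

lemma atMost_split: "{..q} = insert 0 {1..q}" by auto

lemma emb_props:
  assumes "red_vec q (m 0) w"
  shows "orig_vec q m (embv w)" "orig_con q m \<gamma> \<epsilon> k (embv w) = red_con q \<gamma> \<epsilon> k w"
    "orig_obj q m \<delta> (embv w) = red_obj q \<delta> w"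
proof -
  have w0: "m 0 = 0 \<Longrightarrow> w 0 = 0" using assms unfolding red_vec_def by auto
  show "orig_vec q m (embv w)" unfolding orig_vec_def embv_def by auto
  have blk: "i \<in> {1..q} \<Longrightarrow> (\<Sum>j<m i. (embv w i j)^2) = (w i)^2" for i
    using mpos[of i] sum_single[of "m i" "\<lambda>j. (embv w i j)^2"] unfolding embv_def by auto
  have e00: "\<epsilon> * embv w 0 0 = \<epsilon> * w 0" using w0 unfolding embv_def by auto
  show "orig_con q m \<gamma> \<epsilon> k (embv w) = red_con q \<gamma> \<epsilon> k w"
    unfolding orig_con_def red_con_def using blk e00 by (simp add: mult.assoc)
  have b0: "(\<Sum>j<m 0. (embv w 0 j - tstar \<delta> 0 j)^2) = (w 0)^2"
  proof (cases "m 0 = 0")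
    case True then show ?thesis using w0 by simp
  next
    case False
    then show ?thesis using sum_single[of "m 0" "\<lambda>j. (embv w 0 j - tstar \<delta> 0 j)^2"]
      unfolding embv_def tstar_def by auto
  qed
  have bi: "i \<in> {1..q} \<Longrightarrow> (\<Sum>j<m i. (embv w i j - tstar \<delta> i j)^2) = (w i - \<delta> i)^2" for i
    using mpos[of i] sum_single[of "m i" "\<lambda>j. (embv w i j - tstar \<delta> i j)^2"]
    unfolding embv_def tstar_def by auto
  show "orig_obj q m \<delta> (embv w) = red_obj q \<delta> w"
    unfolding orig_obj_def red_obj_def atMost_split using b0 bi by simp
qed

lemma tstar_pos: "1 \<le> i \<Longrightarrow> tstar \<delta> i j = (if j = 0 then \<delta> i else 0)"
  unfolding tstar_def by auto

lemma sq_le_sum: "j < M \<Longrightarrow> (y j)^2 \<le> (\<Sum>j<(M::nat). (y j)^2 :: real)"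
  by (rule member_le_sum) auto

lemma red_props:
  assumes "orig_vec q m y"
  shows "red_vec q (m 0) (redv y)" "red_con q \<gamma> \<epsilon> k (redv y) = orig_con q m \<gamma> \<epsilon> k y"
    "red_obj q \<delta> (redv y) \<le> orig_obj q m \<delta> y"
    "orig_obj q m \<delta> y \<le> red_obj q \<delta> (redv y) \<Longrightarrow> i = 0 \<or> (i \<in> {1..q} \<and> 0 < \<delta> i) \<Longrightarrow> y i j = embv (redv y) i j"
proof -
  have y0: "m 0 = 0 \<Longrightarrow> y 0 j = 0" for j using assms unfolding orig_vec_def by auto
  show "red_vec q (m 0) (redv y)" using y0 unfolding red_vec_def redv_def by auto
  show "red_con q \<gamma> \<epsilon> k (redv y) = orig_con q m \<gamma> \<epsilon> k y"
    unfolding red_con_def orig_con_def redv_def by (auto intro!: sum.cong simp: sum_nonneg)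
  define B where "B i = (\<Sum>j<m i. (y i j - tstar \<delta> i j)^2)" for i
  define b where "b i = (if i = 0 then (y 0 0)^2 else (redv y i - \<delta> i)^2)" for i
  have oo: "orig_obj q m \<delta> y = (\<Sum>i\<le>q. B i)" unfolding orig_obj_def B_def by simp
  have ro: "red_obj q \<delta> (redv y) = (\<Sum>i\<le>q. b i)" unfolding red_obj_def b_def atMost_split
    by (simp add: redv_def)
  define S where "S i = (\<Sum>j<m i. (y i j)^2)" for i
  have Snn: "0 \<le> S i" for i unfolding S_def by (simp add: sum_nonneg)
  have Bi: "i \<in> {1..q} \<Longrightarrow> B i = S i - 2 * \<delta> i * y i 0 + (\<delta> i)^2" for i
    unfolding B_def S_def using mpos[of i] tstar_pos[of i] block_expand[of "m i" "y i" "\<delta> i"] by simp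
  have bi: "i \<in> {1..q} \<Longrightarrow> b i = S i - 2 * \<delta> i * sqrt (S i) + (\<delta> i)^2" for i
    unfolding b_def redv_def S_def by (auto simp: power2_eq_square algebra_simps sum_nonneg)
  have yle: "i \<in> {1..q} \<Longrightarrow> y i 0 \<le> sqrt (S i)" for i
  proof -
    assume i: "i \<in> {1..q}"
    have "(y i 0)^2 \<le> S i" unfolding S_def using mpos[OF i] by (intro sq_le_sum) auto
    then have "\<bar>y i 0\<bar> \<le> sqrt (S i)" using real_le_rsqrt by (metis real_sqrt_abs real_sqrt_le_iff)
    then show ?thesis by simp
  qed
  have B0: "b 0 \<le> B 0"
  proof (cases "m 0 = 0")
    case True then show ?thesis unfolding b_def B_def using y0 by simp
  next
    case False
    then show ?thesis unfolding b_def B_def tstar_def by (simp add: sq_le_sum)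
  qed
  have Bge: "i \<le> q \<Longrightarrow> b i \<le> B i" for i
  proof (cases "i = 0")
    case True then show ?thesis using B0 by simp
  next
    case False
    assume "i \<le> q"
    with False have i: "i \<in> {1..q}" by auto
    have "\<delta> i * y i 0 \<le> \<delta> i * sqrt (S i)" using yle[OF i] dnn[OF i] by (simp add: mult_left_mono)
    then show ?thesis using Bi[OF i] bi[OF i] by linarith
  qed
  show "red_obj q \<delta> (redv y) \<le> orig_obj q m \<delta> y" unfolding oo ro using Bge by (intro sum_mono) auto
  assume le: "orig_obj q m \<delta> y \<le> red_obj q \<delta> (redv y)" and ic: "i = 0 \<or> (i \<in> {1..q} \<and> 0 < \<delta> i)"
  have "(\<Sum>i\<le>q. b i) \<le> (\<Sum>i\<le>q. B i)" using Bge by (intro sum_mono) auto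
  then have "(\<Sum>i\<le>q. B i - b i) = 0" using le unfolding oo ro sum_subtractf by linarith
  then have Beq: "\<forall>i\<le>q. B i = b i" using Bge by (subst (asm) sum_nonneg_eq_0_iff) auto
  show "y i j = embv (redv y) i j"
  proof (cases "i = 0")
    case True
    show ?thesis
    proof (cases "m 0 = 0")
      case True then show ?thesis using y0 \<open>i = 0\<close> unfolding embv_def by simp
    next
      case False
      have "(\<Sum>j<m 0. (y 0 j)^2) = (y 0 0)^2" using Beq[rule_format, of 0] unfolding B_def b_def tstar_def by simp
      then have "j < m 0 \<Longrightarrow> j \<noteq> 0 \<Longrightarrow> y 0 j = 0" using False rest_zero[of "m 0" "y 0" j] by auto
      moreover have "m 0 \<le> j \<Longrightarrow> y 0 j = 0" using assms unfolding orig_vec_def by auto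
      ultimately show ?thesis using \<open>i = 0\<close> False unfolding embv_def redv_def
        by (cases "j < m 0") auto
    qed
  next
    case False
    with ic have i: "i \<in> {1..q}" and dp: "0 < \<delta> i" by auto
    have "\<delta> i * y i 0 = \<delta> i * sqrt (S i)" using Beq[rule_format, of i] Bi[OF i] bi[OF i] i by auto
    then have e: "y i 0 = sqrt (S i)" using dp by simp
    then have "(y i 0)^2 = S i" using Snn by simp
    then have "j < m i \<Longrightarrow> j \<noteq> 0 \<Longrightarrow> y i j = 0" using mpos[OF i] rest_zero[of "m i" "y i" j]
      unfolding S_def by auto
    moreover have "m i \<le> j \<Longrightarrow> y i j = 0" using assms unfolding orig_vec_def by auto
    ultimately show ?thesis using i e mpos[OF i] unfolding embv_def redv_def S_def
      by (cases "j < m i") auto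
  qed
qed

abbreviation "OS x \<equiv> orig_sol q m \<gamma> \<delta> \<epsilon> k x"

lemma emb_blk: "p \<in> {1..q} \<Longrightarrow> (\<Sum>j<m p. (embv w p j)^2) = (w p)^2"
  using mpos[of p] sum_single[of "m p" "\<lambda>j. (embv w p j)^2"] unfolding embv_def by auto

lemma emb_sol:
  assumes "RS w"
  shows "OS (embv w)"
proof -
  have rf: "RF w" using assms unfolding red_sol_def by simp
  then have rv: "red_vec q (m 0) w" and rc: "red_con q \<gamma> \<epsilon> k w = 0" unfolding red_feasible_def by auto
  show ?thesis unfolding orig_sol_def orig_feasible_def
  proof (intro conjI allI impI)
    show "orig_vec q m (embv w)" using emb_props(1)[OF rv] .
    show "orig_con q m \<gamma> \<epsilon> k (embv w) = 0" using emb_props(2)[OF rv] rc by simp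
    fix y assume "orig_vec q m y \<and> orig_con q m \<gamma> \<epsilon> k y = 0"
    then have yv: "orig_vec q m y" and yc: "orig_con q m \<gamma> \<epsilon> k y = 0" by auto
    have "RF (redv y)" unfolding red_feasible_def using red_props(1,2)[OF yv] yc by simp
    then have "red_obj q \<delta> w \<le> red_obj q \<delta> (redv y)" using assms unfolding red_sol_def by auto
    then show "orig_obj q m \<delta> (embv w) \<le> orig_obj q m \<delta> y"
      using emb_props(3)[OF rv] red_props(3)[OF yv] by simp
  qed
qed

lemma orig_sol_red:
  assumes "RS w" "OS y"
  shows "RS (redv y)" "orig_obj q m \<delta> y \<le> red_obj q \<delta> (redv y)" "orig_vec q m y"
proof -
  have rv: "red_vec q (m 0) w" using assms(1) unfolding red_sol_def red_feasible_def by auto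
  have yv: "orig_vec q m y" and yc: "orig_con q m \<gamma> \<epsilon> k y = 0" using assms(2)
    unfolding orig_sol_def orig_feasible_def by auto
  show "orig_vec q m y" by fact
  have rf: "RF (redv y)" unfolding red_feasible_def using red_props(1,2)[OF yv] yc by simp
  have "orig_obj q m \<delta> y \<le> orig_obj q m \<delta> (embv w)"
    using assms(2) emb_sol[OF assms(1)] unfolding orig_sol_def by auto
  also have "\<dots> = red_obj q \<delta> w" using emb_props(3)[OF rv] .
  finally have a: "orig_obj q m \<delta> y \<le> red_obj q \<delta> w" .
  have b: "red_obj q \<delta> w \<le> red_obj q \<delta> (redv y)" using assms(1) rf unfolding red_sol_def by auto
  show "orig_obj q m \<delta> y \<le> red_obj q \<delta> (redv y)" using a b by simp
  show "RS (redv y)" unfolding red_sol_def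
  proof (intro conjI allI impI rf)
    fix v assume "RF v"
    then have "red_obj q \<delta> w \<le> red_obj q \<delta> v" using assms(1) unfolding red_sol_def by auto
    then show "red_obj q \<delta> (redv y) \<le> red_obj q \<delta> v" using a red_props(3)[OF yv] by simp
  qed
qed

lemma y_eq:
  assumes "RS w" "OS y" "redv y i = w i" "i \<in> {1..q} \<and> \<delta> i = 0 \<longrightarrow> w i = 0"
  shows "y i j = embv w i j"
proof -
  note r = orig_sol_red[OF assms(1,2)]
  have e: "embv (redv y) i j = embv w i j" using assms(3) unfolding embv_def by simp
  show ?thesis
  proof (cases "q < i")
    case True then show ?thesis using r(3) unfolding orig_vec_def embv_def by auto
  next
    case False
    show ?thesis
    proof (cases "i = 0 \<or> (i \<in> {1..q} \<and> 0 < \<delta> i)")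
      case True then show ?thesis using red_props(4)[OF r(3) r(2) True] e by simp
    next
      case c: False
      with False have i: "i \<in> {1..q}" and d: "\<delta> i = 0" using dnn[of i] by auto
      then have "w i = 0" using assms(4) by simp
      then have "sqrt (\<Sum>j<m i. (y i j)^2) = 0" using assms(3) i unfolding redv_def by auto
      then have "(\<Sum>j<m i. (y i j)^2) = 0" by simp
      then have "j < m i \<Longrightarrow> y i j = 0" using sum_sq_zero by blast
      moreover have "m i \<le> j \<Longrightarrow> y i j = 0" using r(3) unfolding orig_vec_def by auto
      ultimately show ?thesis using \<open>w i = 0\<close> unfolding embv_def by (cases "j < m i") auto
    qed
  qed
qed

lemma part1:
  assumes "\<exists>!w. RS w"
  shows "\<exists>!x. OS x"
proof -
  obtain w where w: "RS w" and u: "\<And>v. RS v \<Longrightarrow> v = w" using assms by auto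
  have wz: "i \<in> {1..q} \<and> \<delta> i = 0 \<longrightarrow> w i = 0" for i
  proof
    assume "i \<in> {1..q} \<and> \<delta> i = 0"
    then have "w(i := - w i) = w" using u flip_sol[OF w] by auto
    then have "- w i = w i" by (metis fun_upd_same)
    then show "w i = 0" by simp
  qed
  show ?thesis
  proof
    show "OS (embv w)" using emb_sol[OF w] .
    fix y assume y: "OS y"
    have "redv y = w" using u orig_sol_red(1)[OF w y] by simp
    then show "y = embv w" using y_eq[OF w y] wz by (auto simp: fun_eq_iff)
  qed
qed

lemma block_swap:
  assumes "p \<in> {1..q}" "\<delta> p = 0" "\<forall>i j. i \<noteq> p \<longrightarrow> y i j = x i j"
    "(\<Sum>j<m p. (y p j)^2) = (\<Sum>j<m p. (x p j)^2)"
  shows "orig_con q m \<gamma> \<epsilon> k y = orig_con q m \<gamma> \<epsilon> k x" "orig_obj q m \<delta> y = orig_obj q m \<delta> x"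
proof -
  have p0: "p \<noteq> 0" using assms(1) by auto
  have bl: "(\<Sum>j<m i. (y i j)^2) = (\<Sum>j<m i. (x i j)^2)" for i
    using assms(3,4) by (cases "i = p") auto
  show "orig_con q m \<gamma> \<epsilon> k y = orig_con q m \<gamma> \<epsilon> k x"
    unfolding orig_con_def using bl assms(3) p0 by simp
  have tp: "tstar \<delta> p j = 0" for j unfolding tstar_def using assms(2) by simp
  have bo: "(\<Sum>j<m i. (y i j - tstar \<delta> i j)^2) = (\<Sum>j<m i. (x i j - tstar \<delta> i j)^2)" for i
    using assms(3,4) tp by (cases "i = p") auto
  show "orig_obj q m \<delta> y = orig_obj q m \<delta> x" unfolding orig_obj_def using bo by simp
qed

lemma part_block:
  assumes "p \<in> {1..q}" "\<delta> p = 0" "RS w" "{v. RS v} = {w, w(p := - w p)}"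
  shows "orig_unique_up_to_block q m \<gamma> \<delta> \<epsilon> k p"
proof -
  have wz: "i \<in> {1..q} \<and> \<delta> i = 0 \<longrightarrow> w i = 0" if "i \<noteq> p" for i
  proof
    assume "i \<in> {1..q} \<and> \<delta> i = 0"
    then have "RS (w(i := - w i))" using flip_sol[OF assms(3)] by auto
    then have "w(i := - w i) \<in> {w, w(p := - w p)}" using assms(4) by auto
    then have "- w i = w i" using that by (metis fun_upd_apply insert_iff singletonD)
    then show "w i = 0" by simp
  qed
  let ?x = "embv w"
  show ?thesis unfolding orig_unique_up_to_block_def
  proof (intro exI conjI)
    show x: "OS ?x" using emb_sol[OF assms(3)] .
    show "{y. OS y} = {y. orig_vec q m y \<and> (\<forall>i j. i \<noteq> p \<longrightarrow> y i j = ?x i j) \<and>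
              (\<Sum>j<m p. (y p j)^2) = (\<Sum>j<m p. (?x p j)^2)}"
    proof (rule set_eqI, rule iffI)
      fix y assume "y \<in> {y. OS y}"
      then have y: "OS y" by simp
      note r = orig_sol_red[OF assms(3) y]
      have "redv y \<in> {w, w(p := - w p)}" using r(1) assms(4) by auto
      then have ri: "i \<noteq> p \<Longrightarrow> redv y i = w i" and rp: "(redv y p)^2 = (w p)^2" for i by auto
      have A: "\<forall>i j. i \<noteq> p \<longrightarrow> y i j = embv w i j" using y_eq[OF assms(3) y] ri wz by blast
      have "(\<Sum>j<m p. (y p j)^2) = (redv y p)^2" using assms(1) unfolding redv_def
        by (auto simp: sum_nonneg)
      also have "\<dots> = (\<Sum>j<m p. (embv w p j)^2)" using rp emb_blk[OF assms(1)] by simp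
      finally have B: "(\<Sum>j<m p. (y p j)^2) = (\<Sum>j<m p. (embv w p j)^2)" .
      show "y \<in> {y. orig_vec q m y \<and> (\<forall>i j. i \<noteq> p \<longrightarrow> y i j = ?x i j) \<and>
              (\<Sum>j<m p. (y p j)^2) = (\<Sum>j<m p. (?x p j)^2)}" using r(3) A B by simp
    next
      fix y assume "y \<in> {y. orig_vec q m y \<and> (\<forall>i j. i \<noteq> p \<longrightarrow> y i j = ?x i j) \<and>
              (\<Sum>j<m p. (y p j)^2) = (\<Sum>j<m p. (?x p j)^2)}"
      then have yv: "orig_vec q m y" and yi: "\<forall>i j. i \<noteq> p \<longrightarrow> y i j = embv w i j"
        and yp: "(\<Sum>j<m p. (y p j)^2) = (\<Sum>j<m p. (embv w p j)^2)" by auto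
      note bs = block_swap[OF assms(1,2) yi yp]
      show "y \<in> {y. OS y}" using x bs yv unfolding orig_sol_def orig_feasible_def by auto
    qed
  qed
qed

definition "wl l = (\<lambda>i. if i = 0 then l*\<epsilon> else if i \<le> q then \<delta> i / (1 - l*\<gamma> i) else 0)"
definition "psi l = (\<Sum>i=1..q. \<gamma> i * (\<delta> i / (1 - l*\<gamma> i))^2) + 2*\<epsilon>^2*l - k"
definition "fgen p = (\<Sum>i\<in>{1..q}-{p}. \<gamma> i * (\<delta> i / (1 - (1/\<gamma> p)*\<gamma> i))^2) + 2*\<epsilon>^2*(1/\<gamma> p) - k"
definition "Rp p l = (\<Sum>i\<in>{1..q}-{p}. \<gamma> i * (\<delta> i / (1 - l*\<gamma> i))^2) + 2*\<epsilon>^2*l - k"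
definition "adm l \<longleftrightarrow> (\<forall>i\<in>{1..q}. l*\<gamma> i < 1)"

lemma wl_vec: "red_vec q (m 0) (wl l)"
  unfolding red_vec_def wl_def using e0 by auto

lemma wl_con: "red_con q \<gamma> \<epsilon> k (wl l) = psi l"
  unfolding red_con_def psi_def wl_def by (simp add: power2_eq_square)

lemma f1_eq: "f1 q \<gamma> \<delta> \<epsilon> k = fgen 1"
proof -
  have "{2..q} = {1..q} - {1}" by auto
  then show ?thesis unfolding f1_def fgen_def
    by (simp add: divide_inverse mult.commute)
qed

lemma fq_eq: "fq q \<gamma> \<delta> \<epsilon> k = fgen q"
proof -
  have "{1..q-1} = {1..q} - {q}" using q1 by auto
  then show ?thesis unfolding fq_def fgen_def
    by (simp add: divide_inverse mult.commute)
qed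

lemma psi_split: "p \<in> {1..q} \<Longrightarrow> psi l = \<gamma> p * (\<delta> p / (1 - l*\<gamma> p))^2 + Rp p l"
  unfolding psi_def Rp_def by (subst sum.remove[of _ p]) auto

lemma Rp_at: "p \<in> {1..q} \<Longrightarrow> Rp p (1/\<gamma> p) = fgen p"
  unfolding Rp_def fgen_def by simp

lemma endpoint:
  assumes p: "p \<in> {1..q}" and dp: "\<delta> p = 0" and lt: "\<forall>i\<in>{1..q}. i \<noteq> p \<longrightarrow> \<gamma> i / \<gamma> p < 1"
    and nn: "0 \<le> - fgen p / \<gamma> p"
  defines "w \<equiv> (wl (1/\<gamma> p))(p := sqrt (- fgen p / \<gamma> p))"
  shows "RS w" "{v. RS v} = {w, w(p := - w p)}" "w p = sqrt (- fgen p / \<gamma> p)"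
    "\<forall>i\<in>{1..q}. 0 \<le> w i"
proof -
  let ?l = "1/\<gamma> p"
  have gp: "\<gamma> p \<noteq> 0" using gnz p by auto
  have lg: "?l * \<gamma> i = \<gamma> i / \<gamma> p" for i by simp
  have pos: "i \<in> {1..q} \<Longrightarrow> i \<noteq> p \<Longrightarrow> 0 < 1 - ?l * \<gamma> i" for i using lt lg by auto
  have rv: "red_vec q (m 0) w" using wl_vec p unfolding w_def red_vec_def by auto
  have "red_con q \<gamma> \<epsilon> k w = \<gamma> p * (sqrt (- fgen p / \<gamma> p))^2 + Rp p ?l"
    unfolding red_con_def Rp_def w_def wl_def using p
    by (subst sum.remove[of _ p]) (auto intro!: sum.cong simp: power2_eq_square)
  also have "\<dots> = 0" using nn gp Rp_at[OF p] by simp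
  finally have rf: "RF w" using rv unfolding red_feasible_def by simp
  have st0: "w 0 = ?l * \<epsilon>" using p unfolding w_def wl_def by auto
  have st: "\<forall>i\<in>{1..q}. (1 - ?l*\<gamma> i) * w i = \<delta> i"
  proof
    fix i assume i: "i \<in> {1..q}"
    show "(1 - ?l*\<gamma> i) * w i = \<delta> i"
    proof (cases "i = p")
      case True then show ?thesis using dp gp by simp
    next
      case False then show ?thesis using pos[OF i False] i unfolding w_def wl_def by auto
    qed
  qed
  have ep: "1 - ?l * \<gamma> p = 0" using gp by simp
  show se: "{v. RS v} = {w, w(p := - w p)}"
    using endpoint_sols[OF rf st0 st p ep] pos by blast
  then show "RS w" by auto
  show "w p = sqrt (- fgen p / \<gamma> p)" unfolding w_def by simp
  show "\<forall>i\<in>{1..q}. 0 \<le> w i"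
  proof
    fix i assume i: "i \<in> {1..q}"
    show "0 \<le> w i"
    proof (cases "i = p")
      case True then show ?thesis using nn unfolding w_def by simp
    next
      case False then show ?thesis using pos[OF i False] i dnn[OF i] unfolding w_def wl_def by auto
    qed
  qed
qed

lemma interior_sol:
  assumes "adm l" "psi l = 0"
  shows "\<exists>!w. RS w"
proof -
  have rf: "RF (wl l)" using wl_vec wl_con assms(2) unfolding red_feasible_def by simp
  have pos: "\<forall>i\<in>{1..q}. 0 < 1 - l*\<gamma> i" using assms(1) unfolding adm_def by auto
  have st: "\<forall>i\<in>{1..q}. (1 - l*\<gamma> i) * wl l i = \<delta> i" using pos unfolding wl_def by auto
  have st0: "wl l 0 = l * \<epsilon>" unfolding wl_def by simp
  show ?thesis using interior_unique[OF rf st0 st pos] by blast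
qed

lemma adm_between:
  assumes "adm l1" "adm l2" "l1 \<le> l" "l \<le> l2"
  shows "adm l"
  unfolding adm_def
proof
  fix i assume i: "i \<in> {1..q}"
  show "l * \<gamma> i < 1"
  proof (cases "0 \<le> \<gamma> i")
    case True
    then have "l * \<gamma> i \<le> l2 * \<gamma> i" using assms(4) by (simp add: mult_right_mono)
    then show ?thesis using assms(2) i unfolding adm_def by force
  next
    case False
    then have "l * \<gamma> i \<le> l1 * \<gamma> i" using assms(3) by (simp add: mult_right_mono_neg)
    then show ?thesis using assms(1) i unfolding adm_def by force
  qed
qed

lemma psi_cont:
  assumes "adm l1" "adm l2"
  shows "continuous_on {l1..l2} psi"
proof -
  have nz: "\<forall>l\<in>{l1..l2}. \<forall>i\<in>{1..q}. 1 - l*\<gamma> i \<noteq> 0"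
    using adm_between[OF assms] unfolding adm_def by fastforce
  show ?thesis unfolding psi_def
    by (intro continuous_intros) (use nz in auto)
qed

lemma ivt:
  assumes "adm l1" "adm l2" "psi l1 < 0" "0 < psi l2"
  shows "\<exists>l. adm l \<and> psi l = 0"
proof (cases "l1 \<le> l2")
  case True
  obtain l where "l1 \<le> l" "l \<le> l2" "psi l = 0"
    using IVT'[of psi l1 0 l2] assms True psi_cont[OF assms(1,2)] by auto
  then show ?thesis using adm_between[OF assms(1,2)] by blast
next
  case False
  obtain l where "l2 \<le> l" "l \<le> l1" "psi l = 0"
    using IVT2'[of psi l1 0 l2] assms False psi_cont[OF assms(2,1)] by auto
  then show ?thesis using adm_between[OF assms(2,1)] by blast
qed

lemma g_inj: "i \<in> {1..q} \<Longrightarrow> p \<in> {1..q} \<Longrightarrow> i \<noteq> p \<Longrightarrow> \<gamma> i \<noteq> \<gamma> p"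
  using gdec[of i p] gdec[of p i] by (cases "i < p") auto

lemma end_lim:
  assumes p: "p \<in> {1..q}" and F: "F \<le> at (1/\<gamma> p)" and ev: "eventually (\<lambda>l. l \<noteq> 1/\<gamma> p) F"
  shows "(Rp p \<longlongrightarrow> fgen p) F" "((\<lambda>l. (1 - l*\<gamma> p)^2) \<longlongrightarrow> 0) F"
    "eventually (\<lambda>l. (1 - l*\<gamma> p)^2 > 0) F"
proof -
  have gp: "\<gamma> p \<noteq> 0" using gnz p by auto
  have nz: "\<forall>i\<in>{1..q}-{p}. 1 - (1/\<gamma> p)*\<gamma> i \<noteq> 0"
  proof
    fix i assume i: "i \<in> {1..q}-{p}"
    have "\<gamma> i \<noteq> \<gamma> p" using g_inj[of i p] i p by auto
    then show "1 - (1/\<gamma> p)*\<gamma> i \<noteq> 0" using gp by (auto simp: field_simps)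
  qed
  have "continuous (at (1/\<gamma> p)) (Rp p)" unfolding Rp_def
    by (intro continuous_intros) (use nz in auto)
  then have "(Rp p \<longlongrightarrow> Rp p (1/\<gamma> p)) (at (1/\<gamma> p))" by (simp add: continuous_at)
  then show "(Rp p \<longlongrightarrow> fgen p) F" using Rp_at[OF p] F tendsto_mono by metis
  have "continuous (at (1/\<gamma> p)) (\<lambda>l. (1 - l*\<gamma> p)^2)" by (intro continuous_intros)
  then have "((\<lambda>l. (1 - l*\<gamma> p)^2) \<longlongrightarrow> (1 - (1/\<gamma> p)*\<gamma> p)^2) (at (1/\<gamma> p))" by (simp add: continuous_at)
  then show "((\<lambda>l. (1 - l*\<gamma> p)^2) \<longlongrightarrow> 0) F" using gp F tendsto_mono by fastforce
  show "eventually (\<lambda>l. (1 - l*\<gamma> p)^2 > 0) F"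
  proof (rule eventually_mono[OF ev])
    fix l assume "l \<noteq> 1/\<gamma> p"
    then have "1 - l*\<gamma> p \<noteq> 0" using gp by (auto simp: field_simps)
    then show "(1 - l*\<gamma> p)^2 > 0" by simp
  qed
qed

lemma psi_blow:
  assumes p: "p \<in> {1..q}"
  shows "psi l = (\<gamma> p * (\<delta> p)^2) * inverse ((1 - l*\<gamma> p)^2) + Rp p l"
  using psi_split[OF p] by (simp add: power_divide divide_inverse power_mult_distrib power_inverse)

lemma hi_side:
  assumes "\<not> (\<delta> 1 = 0 \<and> fgen 1 \<le> 0)"
  shows "\<exists>l. adm l \<and> 0 < psi l"
proof -
  have p: "1 \<in> {1..q}" using q1 by auto
  let ?c = "1/\<gamma> 1"
  have c: "0 < ?c" using g1 by simp
  have F: "at_left ?c \<le> at ?c" by (rule at_le) simp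
  have ev0: "eventually (\<lambda>l. l \<in> {0<..<?c}) (at_left ?c)" using eventually_at_left_real[OF c] .
  have ev1: "eventually (\<lambda>l. l \<noteq> ?c) (at_left ?c)" by (rule eventually_mono[OF ev0]) auto
  note L = end_lim[OF p F ev1]
  have evp: "eventually (\<lambda>l. 0 < psi l) (at_left ?c)"
  proof (cases "\<delta> 1 = 0")
    case True
    then have "0 < fgen 1" using assms by auto
    then have "eventually (\<lambda>l. 0 < Rp 1 l) (at_left ?c)" using order_tendstoD(1)[OF L(1)] by blast
    then show ?thesis using psi_split[OF p] True by simp
  next
    case False
    then have "0 < \<gamma> 1 * (\<delta> 1)^2" using g1 by simp
    from blowup[OF L(2) L(3) L(1) this] show ?thesis using psi_blow[OF p] by simp
  qed
  have "eventually (\<lambda>l. l \<in> {0<..<?c} \<and> 0 < psi l) (at_left ?c)" using ev0 evp by (rule eventually_conj)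
  then obtain l where l: "l \<in> {0<..<?c}" "0 < psi l"
    using eventually_happens'[OF trivial_limit_at_left_real] by blast
  have "adm l" unfolding adm_def
  proof
    fix i assume i: "i \<in> {1..q}"
    have "l * \<gamma> i \<le> l * \<gamma> 1" using l(1) gle1[OF i] by (simp add: mult_left_mono)
    also have "l * \<gamma> 1 < 1" using l(1) g1 by (simp add: field_simps)
    finally show "l * \<gamma> i < 1" .
  qed
  then show ?thesis using l by blast
qed

lemma lo_side:
  assumes gq: "\<gamma> q < 0" and a: "\<not> (\<delta> q = 0 \<and> 0 \<le> fgen q)"
  shows "\<exists>l. adm l \<and> psi l < 0"
proof -
  have p: "q \<in> {1..q}" using q1 by auto
  let ?c = "1/\<gamma> q"
  have c: "?c < 0" using gq by simp
  have F: "at_right ?c \<le> at ?c" by (rule at_le) simp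
  have ev0: "eventually (\<lambda>l. l \<in> {?c<..<0}) (at_right ?c)" using eventually_at_right_real[OF c] .
  have ev1: "eventually (\<lambda>l. l \<noteq> ?c) (at_right ?c)" by (rule eventually_mono[OF ev0]) auto
  note L = end_lim[OF p F ev1]
  have evp: "eventually (\<lambda>l. psi l < 0) (at_right ?c)"
  proof (cases "\<delta> q = 0")
    case True
    then have "fgen q < 0" using a by auto
    then have "eventually (\<lambda>l. Rp q l < 0) (at_right ?c)" using order_tendstoD(2)[OF L(1)] by blast
    then show ?thesis using psi_split[OF p] True by simp
  next
    case False
    then have "0 < - \<gamma> q * (\<delta> q)^2" using gq by (simp add: mult_neg_pos)
    from blowup[OF L(2) L(3) tendsto_minus[OF L(1)] this]
    show ?thesis using psi_blow[OF p] by (auto elim!: eventually_mono simp: algebra_simps)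
  qed
  have "eventually (\<lambda>l. l \<in> {?c<..<0} \<and> psi l < 0) (at_right ?c)" using ev0 evp by (rule eventually_conj)
  then obtain l where l: "l \<in> {?c<..<0}" "psi l < 0"
    using eventually_happens'[OF trivial_limit_at_right_real] by blast
  have "adm l" unfolding adm_def
  proof
    fix i assume i: "i \<in> {1..q}"
    have "l * \<gamma> i \<le> l * \<gamma> q" using l(1) gleq[OF i] by (simp add: mult_left_mono_neg)
    also have "l * \<gamma> q < 1" using l(1) gq by (simp add: field_simps)
    finally show "l * \<gamma> i < 1" .
  qed
  then show ?thesis using l by blast
qed

lemma lo_side2:
  assumes gq: "0 < \<gamma> q" and a: "0 < \<epsilon> \<or> 0 < k"
  shows "\<exists>l. adm l \<and> psi l < 0"
proof -
  define D where "D = (\<Sum>i=1..q. (\<delta> i)^2)"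
  have D0: "0 \<le> D" unfolding D_def by (simp add: sum_nonneg)
  have gpos: "i \<in> {1..q} \<Longrightarrow> 0 < \<gamma> i" for i using gleq gq by force
  have bnd: "l < 0 \<Longrightarrow> psi l \<le> D / (-l) + 2*\<epsilon>^2*l - k" for l
  proof -
    assume l: "l < 0"
    have "(\<Sum>i=1..q. \<gamma> i * (\<delta> i / (1 - l*\<gamma> i))^2) \<le> (\<Sum>i=1..q. (\<delta> i)^2 / (-l))"
      using term_bound[OF gpos l] by (intro sum_mono) auto
    also have "\<dots> = D / (-l)" unfolding D_def by (simp only: sum_divide_distrib)
    finally show ?thesis unfolding psi_def by simp
  qed
  have admneg: "l < 0 \<Longrightarrow> adm l" for l unfolding adm_def
    using gpos by (auto intro: order.strict_trans[OF mult_neg_pos])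
  show ?thesis
  proof (cases "0 < \<epsilon>")
    case True
    define A where "A = (D + \<bar>k\<bar> + 1) / (2*\<epsilon>^2)"
    define l where "l = - A - 1"
    have e2: "0 < 2*\<epsilon>^2" using True by simp
    have "0 \<le> A" using D0 e2 unfolding A_def by simp
    then have l1: "l \<le> -1" unfolding l_def by simp
    have "D / (-l) \<le> D / 1" using l1 D0 by (intro divide_left_mono) auto
    then have "D / (-l) \<le> D" by simp
    moreover have "2*\<epsilon>^2*l = - (D + \<bar>k\<bar> + 1) - 2*\<epsilon>^2" unfolding l_def A_def using e2
      by (simp add: field_simps)
    moreover have "psi l \<le> D / (-l) + 2*\<epsilon>^2*l - k" using bnd[of l] l1 by simp
    moreover have "0 < 2*\<epsilon>^2" using e2 .
    ultimately have "psi l < 0" by (smt (verit) abs_ge_self)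
    moreover have "adm l" using admneg l1 by simp
    ultimately show ?thesis by blast
  next
    case False
    then have e: "\<epsilon> = 0" and k: "0 < k" using a enn by auto
    define l where "l = - (D + 1) / k"
    have l: "l < 0" unfolding l_def using D0 k by (simp add: divide_neg_pos)
    have "D / (-l) = D * k / (D + 1)" unfolding l_def using D0 k by (simp add: field_simps)
    also have "\<dots> < k" using D0 k by (simp add: field_simps)
    finally have "psi l < 0" using bnd[OF l] e by simp
    moreover have "adm l" using admneg l by simp
    ultimately show ?thesis by blast
  qed
qed

lemma caseA:
  assumes "\<delta> 1 = 0" "f1 q \<gamma> \<delta> \<epsilon> k < 0"
  shows "red_unique_up_to_sign q (m 0) \<gamma> \<delta> \<epsilon> k 1 \<and> orig_unique_up_to_block q m \<gamma> \<delta> \<epsilon> k 1"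
proof -
  have p: "1 \<in> {1..q}" using q1 by auto
  have lt: "\<forall>i\<in>{1..q}. i \<noteq> 1 \<longrightarrow> \<gamma> i / \<gamma> 1 < 1"
    using gdec[of 1] g1 by (auto simp: divide_less_eq_1_pos)
  have f: "fgen 1 < 0" using assms(2) f1_eq by simp
  then have nn: "0 \<le> - fgen 1 / \<gamma> 1" using g1 by (simp add: divide_neg_pos less_imp_le)
  note E = endpoint[OF p assms(1) lt nn]
  have "0 < - fgen 1 / \<gamma> 1" using f g1 by (simp add: divide_neg_pos)
  then have sp: "sqrt (- fgen 1 / \<gamma> 1) \<noteq> 0" using f g1 by simp
  define w where "w = (wl (1/\<gamma> 1))(1 := sqrt (- fgen 1 / \<gamma> 1))"
  have w: "RS w" "{v. RS v} = {w, w(1 := - w 1)}" "w 1 \<noteq> 0"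
    using E(1,2) unfolding w_def apply simp_all using sp by simp
  show ?thesis unfolding red_unique_up_to_sign_def
    using w part_block[OF p assms(1) w(1,2)] by blast
qed

lemma caseB:
  assumes "\<gamma> q < 0" "0 < fq q \<gamma> \<delta> \<epsilon> k" "\<delta> q = 0"
  shows "red_unique_up_to_sign q (m 0) \<gamma> \<delta> \<epsilon> k q \<and> orig_unique_up_to_block q m \<gamma> \<delta> \<epsilon> k q"
proof -
  have p: "q \<in> {1..q}" using q1 by auto
  have lt: "\<forall>i\<in>{1..q}. i \<noteq> q \<longrightarrow> \<gamma> i / \<gamma> q < 1"
    using gdec[of _ q] assms(1) by (auto simp: divide_less_eq_1_neg)
  have f: "0 < fgen q" using assms(2) fq_eq by simp
  then have nn: "0 \<le> - fgen q / \<gamma> q" using assms(1) by (simp add: divide_pos_neg less_imp_le)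
  note E = endpoint[OF p assms(3) lt nn]
  have "0 < - fgen q / \<gamma> q" using f assms(1) by (simp add: divide_pos_neg)
  then have sp: "sqrt (- fgen q / \<gamma> q) \<noteq> 0" using f assms(1) by simp
  define w where "w = (wl (1/\<gamma> q))(q := sqrt (- fgen q / \<gamma> q))"
  have w: "RS w" "{v. RS v} = {w, w(q := - w q)}" "w q \<noteq> 0"
    using E(1,2) unfolding w_def apply simp_all using sp by simp
  show ?thesis unfolding red_unique_up_to_sign_def
    using w part_block[OF p assms(3) w(1,2)] by blast
qed

lemma endpoint_zero:
  assumes p: "p \<in> {1..q}" and dp: "\<delta> p = 0" and lt: "\<forall>i\<in>{1..q}. i \<noteq> p \<longrightarrow> \<gamma> i / \<gamma> p < 1"
    and z: "fgen p = 0"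
  shows "\<exists>!w. RS w"
proof -
  have nn: "0 \<le> - fgen p / \<gamma> p" using z by simp
  note E = endpoint[OF p dp lt nn]
  let ?w = "(wl (1/\<gamma> p))(p := sqrt (- fgen p / \<gamma> p))"
  have h: "?w p = 0" using E(3) z by simp
  then have "?w p = - ?w p" by simp
  then have "?w(p := - ?w p) = ?w" by (rule fun_upd_idem)
  then have se: "{v. RS v} = {?w}" using E(2) by simp
  then have "RS ?w" by blast
  moreover have "RS v \<Longrightarrow> v = ?w" for v using se by blast
  ultimately show ?thesis by blast
qed

lemma nonlag_unique:
  assumes "non_lagrangian q (m 0) \<gamma> \<delta> k"
  shows "\<exists>!w. RS w"
proof -
  have m0: "m 0 = 0" and k0: "k = 0" and gq: "0 < \<gamma> q" using assms unfolding non_lagrangian_def by auto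
  have e: "\<epsilon> = 0" using e0 m0 .
  have gpos: "i \<in> {1..q} \<Longrightarrow> 0 < \<gamma> i" for i using gleq gq by force
  let ?z = "\<lambda>_::nat. 0::real"
  have zf: "RF ?z" unfolding red_feasible_def red_vec_def red_con_def using k0 by simp
  have only: "RF v \<Longrightarrow> v = ?z" for v
  proof -
    assume v: "RF v"
    then have "(\<Sum>i=1..q. \<gamma> i * (v i)^2) = 0" unfolding red_feasible_def red_con_def using e k0 by simp
    moreover have "\<forall>i\<in>{1..q}. 0 \<le> \<gamma> i * (v i)^2" using gpos by (simp add: less_imp_le)
    ultimately have "\<forall>i\<in>{1..q}. \<gamma> i * (v i)^2 = 0"
      by (subst (asm) sum_nonneg_eq_0_iff) auto
    then have a: "i \<in> {1..q} \<Longrightarrow> v i = 0" for i using gpos by fastforce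
    show "v = ?z"
    proof
      fix i show "v i = 0"
        using a[of i] v m0 unfolding red_feasible_def red_vec_def by (cases "i = 0 \<or> q < i") auto
    qed
  qed
  have "RS ?z" unfolding red_sol_def
  proof (intro conjI allI impI zf)
    fix v assume "RF v"
    then have "v = ?z" by (rule only)
    then show "red_obj q \<delta> ?z \<le> red_obj q \<delta> v" by simp
  qed
  moreover have "RS v \<Longrightarrow> v = ?z" for v
  proof -
    assume "RS v"
    then have "RF v" unfolding red_sol_def by simp
    then show "v = ?z" by (rule only)
  qed
  ultimately show ?thesis by (rule ex1I)
qed

lemma unique_dir:
  assumes "\<not> (singly_lagrangian q (m 0) \<gamma> \<delta> k \<and>
         ((f1 q \<gamma> \<delta> \<epsilon> k < 0 \<and> \<delta> 1 = 0) \<or> (\<gamma> q < 0 \<and> 0 < fq q \<gamma> \<delta> \<epsilon> k \<and> \<delta> q = 0)))"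
  shows "\<exists>!w. RS w"
proof (cases "multiply_lagrangian q (m 0) \<delta> k")
  case True
  then have "psi 0 = 0" unfolding multiply_lagrangian_def psi_def by simp
  moreover have "adm 0" unfolding adm_def by simp
  ultimately show ?thesis using interior_sol by blast
next
  case nm: False
  show ?thesis
  proof (cases "non_lagrangian q (m 0) \<gamma> \<delta> k")
    case True then show ?thesis using nonlag_unique by blast
  next
    case nn: False
    then have sl: "singly_lagrangian q (m 0) \<gamma> \<delta> k" using nm unfolding singly_lagrangian_def by simp
    then have nA: "\<not> (fgen 1 < 0 \<and> \<delta> 1 = 0)" and nB: "\<not> (\<gamma> q < 0 \<and> 0 < fgen q \<and> \<delta> q = 0)"
      using assms f1_eq fq_eq by auto
    have p1: "1 \<in> {1..q}" and pq: "q \<in> {1..q}" using q1 by auto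
    show ?thesis
    proof (cases "\<delta> 1 = 0 \<and> fgen 1 \<le> 0")
      case True
      then have "fgen 1 = 0" using nA by auto
      moreover have "\<forall>i\<in>{1..q}. i \<noteq> 1 \<longrightarrow> \<gamma> i / \<gamma> 1 < 1"
        using gdec[of 1] g1 by (auto simp: divide_less_eq_1_pos)
      ultimately show ?thesis using endpoint_zero[OF p1] True by blast
    next
      case hiok: False
      show ?thesis
      proof (cases "\<gamma> q < 0 \<and> \<delta> q = 0 \<and> 0 \<le> fgen q")
        case True
        then have "fgen q = 0" using nB by auto
        moreover have "\<forall>i\<in>{1..q}. i \<noteq> q \<longrightarrow> \<gamma> i / \<gamma> q < 1"
          using gdec[of _ q] True by (auto simp: divide_less_eq_1_neg)
        ultimately show ?thesis using endpoint_zero[OF pq] True by blast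
      next
        case look: False
        obtain l2 where l2: "adm l2" "0 < psi l2" using hi_side[OF hiok] by blast
        have "\<exists>l. adm l \<and> psi l < 0"
        proof (cases "\<gamma> q < 0")
          case True then show ?thesis using lo_side look by blast
        next
          case False
          then have gq: "0 < \<gamma> q" using gnz[OF pq] by linarith
          have "0 < \<epsilon> \<or> 0 < k"
          proof (rule ccontr)
            assume "\<not> (0 < \<epsilon> \<or> 0 < k)"
            then have e: "\<epsilon> = 0" and kle: "k \<le> 0" using enn by auto
            then have m0: "m 0 = 0" using reg by auto
            obtain x where x: "orig_feasible q m \<gamma> \<epsilon> k x" using feas by blast
            have gpos: "i \<in> {1..q} \<Longrightarrow> 0 < \<gamma> i" for i using gleq gq by force
            have "0 \<le> (\<Sum>i=1..q. \<gamma> i * (\<Sum>j<m i. (x i j)^2))"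
              using gpos by (intro sum_nonneg mult_nonneg_nonneg) (auto simp: less_imp_le sum_nonneg)
            moreover have "(\<Sum>i=1..q. \<gamma> i * (\<Sum>j<m i. (x i j)^2)) = k"
              using x e unfolding orig_feasible_def orig_con_def by simp
            ultimately have "k = 0" using kle by simp
            then show False using nm nn m0 gq unfolding multiply_lagrangian_def non_lagrangian_def by auto
          qed
          then show ?thesis using lo_side2[OF gq] by blast
        qed
        then obtain l1 where l1: "adm l1" "psi l1 < 0" by blast
        obtain l where "adm l" "psi l = 0" using ivt[OF l1(1) l2(1) l1(2) l2(2)] by blast
        then show ?thesis using interior_sol by blast
      qed
    qed
  qed
qed

lemma main:
  shows "((\<exists>!w. RS w) \<longrightarrow> (\<exists>!x. OS x))
    \<and> ((\<not> (\<exists>!w. RS w)) \<longleftrightarrow>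
         singly_lagrangian q (m 0) \<gamma> \<delta> k \<and>
         ((f1 q \<gamma> \<delta> \<epsilon> k < 0 \<and> \<delta> 1 = 0) \<or>
          (\<gamma> q < 0 \<and> 0 < fq q \<gamma> \<delta> \<epsilon> k \<and> \<delta> q = 0)))
    \<and> (singly_lagrangian q (m 0) \<gamma> \<delta> k \<and> f1 q \<gamma> \<delta> \<epsilon> k < 0 \<and> \<delta> 1 = 0 \<longrightarrow>
         red_unique_up_to_sign q (m 0) \<gamma> \<delta> \<epsilon> k 1 \<and> orig_unique_up_to_block q m \<gamma> \<delta> \<epsilon> k 1)
    \<and> (singly_lagrangian q (m 0) \<gamma> \<delta> k \<and> \<gamma> q < 0 \<and> 0 < fq q \<gamma> \<delta> \<epsilon> k \<and> \<delta> q = 0 \<longrightarrow>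
         red_unique_up_to_sign q (m 0) \<gamma> \<delta> \<epsilon> k q \<and> orig_unique_up_to_block q m \<gamma> \<delta> \<epsilon> k q)"
proof -
  have nu: "red_unique_up_to_sign q (m 0) \<gamma> \<delta> \<epsilon> k p \<Longrightarrow> \<not> (\<exists>!w. RS w)" for p
  proof
    assume "red_unique_up_to_sign q (m 0) \<gamma> \<delta> \<epsilon> k p" "\<exists>!w. RS w"
    then obtain w where w: "w p \<noteq> 0" "{v. RS v} = {w, w(p := - w p)}" and u: "\<And>v. RS v \<Longrightarrow> v = w" and "RS w"
      unfolding red_unique_up_to_sign_def by blast
    then have "RS (w(p := - w p))" by blast
    then have "w(p := - w p) = w" using u by blast
    then have "- w p = w p" by (metis fun_upd_same)
    then show False using w(1) by simp
  qed
  have A1: "(\<exists>!w. RS w) \<longrightarrow> (\<exists>!x. OS x)" using part1 by blast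
  have A3: "singly_lagrangian q (m 0) \<gamma> \<delta> k \<and> f1 q \<gamma> \<delta> \<epsilon> k < 0 \<and> \<delta> 1 = 0 \<longrightarrow>
         red_unique_up_to_sign q (m 0) \<gamma> \<delta> \<epsilon> k 1 \<and> orig_unique_up_to_block q m \<gamma> \<delta> \<epsilon> k 1"
    using caseA by simp
  have A4: "singly_lagrangian q (m 0) \<gamma> \<delta> k \<and> \<gamma> q < 0 \<and> 0 < fq q \<gamma> \<delta> \<epsilon> k \<and> \<delta> q = 0 \<longrightarrow>
         red_unique_up_to_sign q (m 0) \<gamma> \<delta> \<epsilon> k q \<and> orig_unique_up_to_block q m \<gamma> \<delta> \<epsilon> k q"
    using caseB by simp
  have A2: "(\<not> (\<exists>!w. RS w)) \<longleftrightarrow>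
         singly_lagrangian q (m 0) \<gamma> \<delta> k \<and>
         ((f1 q \<gamma> \<delta> \<epsilon> k < 0 \<and> \<delta> 1 = 0) \<or>
          (\<gamma> q < 0 \<and> 0 < fq q \<gamma> \<delta> \<epsilon> k \<and> \<delta> q = 0))"
  proof
    assume nE: "\<not> (\<exists>!w. RS w)"
    show "singly_lagrangian q (m 0) \<gamma> \<delta> k \<and>
         ((f1 q \<gamma> \<delta> \<epsilon> k < 0 \<and> \<delta> 1 = 0) \<or>
          (\<gamma> q < 0 \<and> 0 < fq q \<gamma> \<delta> \<epsilon> k \<and> \<delta> q = 0))"
    proof (rule ccontr)
      assume "\<not> (singly_lagrangian q (m 0) \<gamma> \<delta> k \<and>
         ((f1 q \<gamma> \<delta> \<epsilon> k < 0 \<and> \<delta> 1 = 0) \<or>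
          (\<gamma> q < 0 \<and> 0 < fq q \<gamma> \<delta> \<epsilon> k \<and> \<delta> q = 0)))"
      from unique_dir[OF this] nE show False by contradiction
    qed
  next
    assume h: "singly_lagrangian q (m 0) \<gamma> \<delta> k \<and>
         ((f1 q \<gamma> \<delta> \<epsilon> k < 0 \<and> \<delta> 1 = 0) \<or>
          (\<gamma> q < 0 \<and> 0 < fq q \<gamma> \<delta> \<epsilon> k \<and> \<delta> q = 0))"
    show "\<not> (\<exists>!w. RS w)"
    proof (cases "f1 q \<gamma> \<delta> \<epsilon> k < 0 \<and> \<delta> 1 = 0")
      case True
      then have "red_unique_up_to_sign q (m 0) \<gamma> \<delta> \<epsilon> k 1" using caseA by blast
      then show ?thesis using nu by blast
    next
      case False
      then have "red_unique_up_to_sign q (m 0) \<gamma> \<delta> \<epsilon> k q" using h caseB by blast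
      then show ?thesis using nu by blast
    qed
  qed
  show ?thesis using A1 A2 A3 A4 by blast
qed

end

theorem corollary8p1:
  fixes q :: nat and m :: "nat \<Rightarrow> nat" and \<gamma> \<delta> :: "nat \<Rightarrow> real" and \<epsilon> k :: real
  assumes "canonical_form q m \<gamma> \<delta> \<epsilon> k"
    and "regular (m 0) \<epsilon>"
  shows "((\<exists>!w. red_sol q (m 0) \<gamma> \<delta> \<epsilon> k w) \<longrightarrow> (\<exists>!x. orig_sol q m \<gamma> \<delta> \<epsilon> k x))
    \<and> ((\<not> (\<exists>!w. red_sol q (m 0) \<gamma> \<delta> \<epsilon> k w)) \<longleftrightarrow>
         singly_lagrangian q (m 0) \<gamma> \<delta> k \<and>
         ((f1 q \<gamma> \<delta> \<epsilon> k < 0 \<and> \<delta> 1 = 0) \<or>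
          (\<gamma> q < 0 \<and> 0 < fq q \<gamma> \<delta> \<epsilon> k \<and> \<delta> q = 0)))
    \<and> (singly_lagrangian q (m 0) \<gamma> \<delta> k \<and> f1 q \<gamma> \<delta> \<epsilon> k < 0 \<and> \<delta> 1 = 0 \<longrightarrow>
         red_unique_up_to_sign q (m 0) \<gamma> \<delta> \<epsilon> k 1 \<and> orig_unique_up_to_block q m \<gamma> \<delta> \<epsilon> k 1)
    \<and> (singly_lagrangian q (m 0) \<gamma> \<delta> k \<and> \<gamma> q < 0 \<and> 0 < fq q \<gamma> \<delta> \<epsilon> k \<and> \<delta> q = 0 \<longrightarrow>
         red_unique_up_to_sign q (m 0) \<gamma> \<delta> \<epsilon> k q \<and> orig_unique_up_to_block q m \<gamma> \<delta> \<epsilon> k q)"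
proof -
  interpret cf q m \<gamma> \<delta> \<epsilon> k
    using assms unfolding canonical_form_def regular_def by unfold_locales auto
  show ?thesis using main .
qed

end
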